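(* Let $Z$ be a finite abelian group, $q$ a prime power, and $\lambda_0,\dots,\lambda_q$ linear characters of $Z$, with $\Lambda:=\sum_{i=0}^q\lambda_i$. (i) If $\Lambda$ vanishes on $Z\setminus\{1\}$, then $|Z|$ divides $q+1$. (ii) If there is $z\in Z$ such that $\Lambda$ vanishes on $Z\setminus\{1,z\}$ and $\Lambda(z)=-(q+1)$, then $|Z|$ divides $2(q+1)$. (iii) Suppose $n\ge3$ is odd, $(n,q)\ne(3,2)$, $\lambda_0^2=1_Z$, and $\Sigma:=-\lambda_0+A\sum_{i=0}^q\lambda_i$ with $A=(q^n+1)/(q+1)$ takes values only in $\{-q^n,0\}\cup\{\pm q^i:0\le i\le n-1\}$ on $Z\setminus\{1\}$. Then either $|Z|$ divides $q+1$, or $Z$ contains an element $z$ with $\lambda_i(z)=-1$ for all $0\le i\le q$; in the latter case, if moreover $\Sigma$ is faithful, then $|Z|$ divides $2(q+1)$. *)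

theory Defs
  imports Complex_Main "HOL-Algebra.Group" "HOL-Computational_Algebra.Primes"
begin

definition linear_char :: "('a, 'b) monoid_scheme \<Rightarrow> ('a \<Rightarrow> complex) \<Rightarrow> bool" where
  "linear_char G \<chi> \<longleftrightarrow>
     (\<forall>x\<in>carrier G. \<chi> x \<noteq> 0) \<and>
     (\<forall>x\<in>carrier G. \<forall>y\<in>carrier G. \<chi> (x \<otimes>\<^bsub>G\<^esub> y) = \<chi> x * \<chi> y)"

definition prime_power_nat :: "nat \<Rightarrow> bool" where
  "prime_power_nat q \<longleftrightarrow> (\<exists>p k. prime p \<and> k \<ge> 1 \<and> q = p ^ k)"

definition faithful_char :: "('a, 'b) monoid_scheme \<Rightarrow> ('a \<Rightarrow> complex) \<Rightarrow> bool" where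
  "faithful_char G \<chi> \<longleftrightarrow> {g \<in> carrier G. \<chi> g = \<chi> \<one>\<^bsub>G\<^esub>} = {\<one>\<^bsub>G\<^esub>}"

end

theory Submission
  imports Defs "Jordan_Normal_Form.Char_Poly"
begin

lemma sum_roots_unity_int:
  fixes x :: "nat \<Rightarrow> complex"
  assumes N: "N > 0" and I: "finite I" and xu: "\<And>i. i \<in> I \<Longrightarrow> x i ^ N = 1"
    and rat: "(\<Sum>i\<in>I. x i) \<in> \<rat>"
  shows "(\<Sum>i\<in>I. x i) \<in> \<int>"
proof -
  define R where "R = {z::complex. z ^ N = 1}"
  have finR: "finite R" unfolding R_def using N by (intro finite_roots_unity) auto
  obtain rs where rs: "set rs = R" "distinct rs" using finite_distinct_list[OF finR] by blast
  define m where "m = length rs"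
  define s where "s = (\<Sum>i\<in>I. x i)"
  define M :: "int mat" where "M = mat m m (\<lambda>(a,b). int (card {i\<in>I. x i * rs!a = rs!b}))"
  define v :: "complex vec" where "v = vec m (\<lambda>b. rs!b)"
  have M: "M \<in> carrier_mat m m" unfolding M_def by simp
  have Mc: "map_mat (of_int :: int \<Rightarrow> complex) M \<in> carrier_mat m m" using M by simp
  have 1: "1 \<in> R" unfolding R_def by simp
  then have "m > 0" unfolding m_def using rs by (cases rs) auto
  have sumR: "(\<Sum>b<m. f (rs!b)) = (\<Sum>r\<in>R. f r)" for f :: "complex \<Rightarrow> complex"
  proof -
    have "bij_betw (\<lambda>b. rs!b) {..<m} R" unfolding m_def using rs
      by (metis bij_betw_nth lessThan_atLeast0)
    then show ?thesis by (rule sum.reindex_bij_betw)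
  qed
  have Rmult: "a \<in> R \<Longrightarrow> b \<in> R \<Longrightarrow> a * b \<in> R" for a b unfolding R_def by (simp add: power_mult_distrib)
  have ev: "map_mat of_int M *\<^sub>v v = s \<cdot>\<^sub>v v"
  proof (rule eq_vecI)
    fix a assume a: "a < dim_vec (s \<cdot>\<^sub>v v)"
    then have a: "a < m" unfolding v_def by simp
    have ra: "rs!a \<in> R" using a rs unfolding m_def by auto
    have "(map_mat of_int M *\<^sub>v v) $ a = (\<Sum>b<m. of_nat (card {i\<in>I. x i * rs!a = rs!b}) * rs!b)"
      using a unfolding M_def v_def by (simp add: mult_mat_vec_def scalar_prod_def atLeast0LessThan)
    also have "\<dots> = (\<Sum>r\<in>R. of_nat (card {i\<in>I. x i * rs!a = r}) * r)"
      by (rule sumR)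
    also have "\<dots> = (\<Sum>r\<in>R. \<Sum>i\<in>{i\<in>I. x i * rs!a = r}. x i * rs!a)"
      by (intro sum.cong refl) auto
    also have "\<dots> = (\<Sum>i\<in>I. x i * rs!a)"
      by (rule sum.group) (use I finR ra xu Rmult R_def in auto)
    also have "\<dots> = (s \<cdot>\<^sub>v v) $ a" using a unfolding s_def v_def by (simp add: sum_distrib_right)
    finally show "(map_mat of_int M *\<^sub>v v) $ a = (s \<cdot>\<^sub>v v) $ a" .
  qed (simp add: v_def M_def)
  have "v \<noteq> 0\<^sub>v m"
  proof
    assume "v = 0\<^sub>v m"
    then have "v $ 0 = 0" using \<open>m > 0\<close> by simp
    moreover have "rs!0 \<in> R" using rs \<open>m>0\<close> unfolding m_def by auto
    ultimately show False unfolding v_def R_def using \<open>m>0\<close> N by (simp add: power_0_left)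
  qed
  then have "eigenvalue (map_mat of_int M) s"
    unfolding eigenvalue_def eigenvector_def using ev M
    by (intro exI[of _ v]) (auto simp: v_def)
  then have "poly (char_poly (map_mat of_int M)) s = 0"
    using eigenvalue_root_char_poly[OF Mc] by simp
  have r: "poly (map_poly of_int (char_poly M)) s = 0" if "poly (char_poly (map_mat (of_int :: int \<Rightarrow> complex) M)) s = 0"
  proof -
    have "char_poly (map_mat (of_int :: int \<Rightarrow> complex) M) = map_poly of_int (char_poly M)"
      by (rule of_int_hom.char_poly_hom[OF M])
    with that show ?thesis by simp
  qed
  have "lead_coeff (char_poly M) = 1" using degree_monic_char_poly[OF M] by simp
  then have "algebraic_int s" using r[OF \<open>poly (char_poly _) s = 0\<close>] algebraic_int_altdef_ipoly by blast
  then show ?thesis using rat rational_algebraic_int_is_int unfolding s_def by blast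
qed

lemma odd_pow_dvd:
  fixes Q :: int
  assumes "odd n" shows "(Q + 1) dvd (Q ^ n + 1)"
proof -
  obtain m where n: "n = 2*m+1" using assms oddE by blast
  have "(Q + 1) dvd (Q ^ (2*m+1) + 1)"
  proof (induction m)
    case 0 then show ?case by simp
  next
    case (Suc m)
    have "Q ^ (2*Suc m+1) + 1 = Q^2 * (Q ^ (2*m+1) + 1) - (Q - 1) * (Q + 1)"
      by (simp add: algebra_simps power2_eq_square)
    then show ?case using Suc by simp
  qed
  then show ?thesis using n by simp
qed

lemma A_ge3:
  fixes Q A :: int
  assumes Q: "Q \<ge> 2" and n: "n \<ge> 3" and A: "A * (Q + 1) = Q ^ n + 1"
  shows "A \<ge> 3"
proof -
  have h3: "Q ^ 3 \<le> Q ^ n" using Q n by (intro power_increasing) auto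
  have h: "(Q*Q - Q + 1) * (Q+1) = Q^3 + 1" by (simp add: algebra_simps power3_eq_cube)
  have "(Q*Q - Q + 1) * (Q+1) \<le> A * (Q+1)" using h h3 A by linarith
  then have a: "Q*Q - Q + 1 \<le> A" using mult_right_le_imp_le[of "Q*Q - Q + 1" "Q+1" A] Q by linarith
  have "Q * Q \<ge> 2 * Q" using Q by (intro mult_right_mono) auto
  then show ?thesis using a Q by linarith
qed

lemma twoA_gt:
  fixes Q A :: int
  assumes Q: "Q \<ge> 2" and n: "n \<ge> 3" and A: "A * (Q + 1) = Q ^ n + 1"
  shows "Q ^ (n-1) + 1 < 2 * A"
proof (rule ccontr)
  assume "\<not> ?thesis"
  then have h: "2 * A * (Q+1) \<le> (Q ^ (n-1) + 1) * (Q+1)" using Q by (intro mult_right_mono) auto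
  define P where "P = Q^(n-1)"
  have qn: "Q^n = Q * P" unfolding P_def using n by (cases n) auto
  have "P \<ge> Q^1" unfolding P_def using Q n by (intro power_increasing) auto
  then have P2: "P \<ge> 2" using Q by simp
  have "2 * Q * P + 2 \<le> (P + 1) * (Q + 1)" using h A qn P_def by (simp add: algebra_simps)
  then have "(P - 1) * (Q - 1) \<le> 0" by (simp add: algebra_simps)
  moreover have "(P - 1) * (Q - 1) > 0" using P2 Q by simp
  ultimately show False by simp
qed

lemma no_plus:
  fixes Q A :: int
  assumes Q: "Q \<ge> 2" and n: "n \<ge> 3" and ex: "(n, Q) \<noteq> (3, 2)" and A: "A * (Q + 1) = Q ^ n + 1"
    and i: "i \<le> n - 1"
  shows "Q ^ i + 1 \<noteq> A"
proof
  assume h: "Q ^ i + 1 = A"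
  have A3: "A \<ge> 3" using A_ge3[OF Q n A] .
  show False
  proof (cases i)
    case 0 then show ?thesis using h A3 by simp
  next
    case (Suc j)
    obtain m where m: "n = Suc m" using n by (cases n) auto
    have A': "A = Q * Q^j + 1" using h Suc by simp
    have n': "Q^n = Q * Q^m" using m by simp
    have "(Q * Q^j + 1) * (Q + 1) = Q * Q^m + 1" using A unfolding A' n' .
    then have "Q * (Q * Q^j + Q^j + 1) = Q * Q^m" by (simp add: algebra_simps)
    then have e: "Q * Q^j + Q^j + 1 = Q^m" using Q by simp
    show False
    proof (cases j)
      case 0
      then have e2: "Q + 2 = Q^m" using e by simp
      have m2: "m \<ge> 2" using m n by simp
      show False
      proof (cases "m = 2")
        case True
        then have "(Q-2)*(Q+1) = 0" using e2 by (simp add: power2_eq_square algebra_simps)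
        then have "Q = 2" using Q by simp
        then show False using ex m True by simp
      next
        case False
        then have Q3m: "Q^3 \<le> Q^m" using m2 Q by (intro power_increasing) auto
        have "Q * Q \<ge> 2 * 2" using Q by (intro mult_mono) auto
        then have "Q * Q * Q \<ge> 4 * Q" using Q by (intro mult_right_mono) auto
        then have "Q^3 \<ge> 4 * Q" by (simp add: power3_eq_cube)
        then show False using e2 Q Q3m by linarith
      qed
    next
      case (Suc l)
      have "Q dvd Q^m" using m n by (cases m) auto
      moreover have "Q dvd Q * Q^j + Q^j" using Suc by simp
      ultimately have "Q dvd (Q * Q^j + Q^j) + 1" using e by simp
      then have "Q dvd 1" using dvd_add_right_iff[OF \<open>Q dvd Q * Q^j + Q^j\<close>] by simp
      then show False using Q by simp
    qed
  qed
qed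

lemma no_minus:
  fixes Q A :: int
  assumes Q: "Q \<ge> 2" and n: "n \<ge> 3" and ex: "(n, Q) \<noteq> (3, 2)" and A: "A * (Q + 1) = Q ^ n + 1"
    and i: "i \<le> n - 1"
  shows "Q ^ i - 1 \<noteq> A"
proof
  assume h: "Q ^ i - 1 = A"
  have A3: "A \<ge> 3" using A_ge3[OF Q n A] .
  show False
  proof (cases i)
    case 0 then show ?thesis using h A3 by simp
  next
    case (Suc j)
    have "(Q * Q^j - 1) * (Q + 1) = Q ^ n + 1" using h A Suc by simp
    then have e: "Q * Q^i + Q^i = Q^n + Q + 2" using Suc by (simp add: algebra_simps)
    have "Q dvd Q^n" using n by (simp add: dvd_power)
    moreover have "Q dvd Q * Q^i + Q^i" using Suc by simp
    moreover have "Q dvd Q^n + Q" using \<open>Q dvd Q^n\<close> by simp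
    ultimately have "Q dvd (Q^n + Q) + 2" using e by simp
    then have "Q dvd 2" using dvd_add_right_iff[OF \<open>Q dvd Q^n + Q\<close>] by simp
    then have Q2: "Q = 2" using Q zdvd_imp_le[of Q 2] by simp
    then have e3: "3 * 2^i = (2::int)^n + 4" using e by simp
    show False
    proof (cases "i \<ge> 3")
      case True
      define a where "a = i - 3"
      have a: "i = a + 3" using True unfolding a_def by simp
      define b where "b = n - 3"
      have b: "n = b + 3" using n unfolding b_def by simp
      have "24 * 2^a = 8 * (2::int)^b + 4" using e3 a b by (simp add: power_add)
      then have "8 * (3 * 2^a - 2^b) = (4::int)" by (simp add: algebra_simps)
      then have "\<exists>c::int. 8 * c = 4" by blast
      then show False by presburger
    next
      case False
      have n8: "(2::int)^3 \<le> 2^n" using n by (intro power_increasing) auto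
      have "i = 1 \<or> i = 2" using False Suc by auto
      then show False
      proof
        assume "i = 1" then show False using e3 n8 by simp
      next
        assume "i = 2"
        then have "(2::int)^n = 2^3" using e3 by simp
        then have "n = 3" using power_inject_exp[of "2::int" n 3] by simp
        then show False using ex Q2 by simp
      qed
    qed
  qed
qed

lemma arith_main:
  fixes Q A k s e :: int
  assumes Q: "Q \<ge> 2" and n: "n \<ge> 3" and ex: "(n, Q) \<noteq> (3, 2)" and A: "A * (Q + 1) = Q ^ n + 1"
    and e: "e = 1 \<or> e = -1"
    and s: "s \<in> {- (Q ^ n), 0} \<union> {Q ^ i | i. i \<le> n - 1} \<union> {- (Q ^ i) | i. i \<le> n - 1}"
    and k: "A * k = s + e"
  shows "k = 0 \<or> k = - (Q + 1)"
proof -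
  have A3: "A \<ge> 3" using A_ge3[OF Q n A] .
  have T: "Q ^ (n-1) + 1 < 2 * A" using twoA_gt[OF Q n A] .
  consider "s = - (Q ^ n)" | "s = 0" | i where "i \<le> n - 1" "s = Q^i \<or> s = - (Q^i)" using s by blast
  then show ?thesis
  proof cases
    case 1
    show ?thesis
    proof (cases "e = -1")
      case True
      then have "A * k = A * (-(Q+1))" using k 1 A by (simp add: algebra_simps)
      then show ?thesis using A3 by simp
    next
      case False
      then have "e = 1" using e by simp
      then have "A * (k + Q + 1) = 2" using k 1 A by (simp add: algebra_simps)
      moreover have "A dvd A * (k + Q + 1)" by simp
      ultimately have "A dvd 2" by simp
      then show ?thesis using A3 zdvd_imp_le[of A 2] by simp
    qed
  next
    case 2
    then have "A * k = 1 \<or> A * k = -1" using k e by auto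
    then have "A * k = 1 \<or> A * (-k) = 1" by auto
    then obtain c where "A * c = 1" by blast
    then have "A dvd 1" unfolding dvd_def by (metis)
    then show ?thesis using A3 zdvd_imp_le[of A 1] by simp
  next
    case (3 i)
    have Qi: "Q^i \<le> Q^(n-1)" using 3 Q by (intro power_increasing) auto
    have Qi1: "Q^i \<ge> 1" using Q by simp
    show ?thesis
    proof (cases "k = 0")
      case True then show ?thesis by simp
    next
      case False
      have "\<bar>A * k\<bar> < 2 * A" using k e 3 Qi Qi1 T by auto
      then have "A * \<bar>k\<bar> < A * 2" using A3 by (simp add: abs_mult)
      then have "\<bar>k\<bar> < 2" using A3 by simp
      then have "k = 1 \<or> k = -1" using False by auto
      then have "A = s + e \<or> - A = s + e" using k by auto
      then have "Q^i + 1 = A \<or> Q^i - 1 = A" using e 3 A3 Qi1 by (smt (verit))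
      then show ?thesis using no_plus[OF Q n ex A 3(1)] no_minus[OF Q n ex A 3(1)] by blast
    qed
  qed
qed

lemma lc_one:
  fixes G (structure)
  assumes "group G" "linear_char G \<chi>" shows "\<chi> \<one>\<^bsub>G\<^esub> = 1"
proof -
  interpret group G by fact
  have "\<chi> \<one> = \<chi> \<one> * \<chi> \<one>" using assms(2) unfolding linear_char_def
    by (metis one_closed l_one)
  moreover have "\<chi> \<one> \<noteq> 0" using assms(2) unfolding linear_char_def by simp
  ultimately show ?thesis by (metis mult_cancel_right1)
qed

lemma sum_shift:
  fixes G (structure)
  assumes "group G" "finite (carrier G)" "x \<in> carrier G"
  shows "(\<Sum>y\<in>carrier G. f (x \<otimes>\<^bsub>G\<^esub> y)) = (\<Sum>y\<in>carrier G. f y)"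
proof -
  interpret group G by fact
  have "(\<Sum>y\<in>carrier G. f y) = (\<Sum>y\<in>(\<lambda>y. x \<otimes> y) ` carrier G. f y)"
    using surj_const_mult[OF assms(3)] by simp
  also have "\<dots> = (\<Sum>y\<in>carrier G. f (x \<otimes> y))"
    by (subst sum.reindex) (use inj_on_cmult[OF assms(3)] in auto)
  finally show ?thesis by simp
qed

lemma prod_shift:
  fixes G (structure)
  assumes "group G" "finite (carrier G)" "x \<in> carrier G"
  shows "(\<Prod>y\<in>carrier G. f (x \<otimes>\<^bsub>G\<^esub> y)) = (\<Prod>y\<in>carrier G. f y)"
proof -
  interpret group G by fact
  have "(\<Prod>y\<in>carrier G. f y) = (\<Prod>y\<in>(\<lambda>y. x \<otimes> y) ` carrier G. f y)"
    using surj_const_mult[OF assms(3)] by simp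
  also have "\<dots> = (\<Prod>y\<in>carrier G. f (x \<otimes> y))"
    by (subst prod.reindex) (use inj_on_cmult[OF assms(3)] in auto)
  finally show ?thesis by simp
qed

lemma lc_pow:
  assumes "group G" "finite (carrier G)" "linear_char G \<chi>" "x \<in> carrier G"
  shows "\<chi> x ^ card (carrier G) = 1"
proof -
  have nz: "(\<Prod>y\<in>carrier G. \<chi> y) \<noteq> 0" using assms(3) unfolding linear_char_def
    by (simp add: prod_zero_iff assms(2))
  have "(\<Prod>y\<in>carrier G. \<chi> y) = (\<Prod>y\<in>carrier G. \<chi> (x \<otimes>\<^bsub>G\<^esub> y))"
    using prod_shift[OF assms(1,2,4), of \<chi>] by simp
  also have "\<dots> = (\<Prod>y\<in>carrier G. \<chi> x * \<chi> y)"
    using assms(3,4) unfolding linear_char_def by (intro prod.cong) auto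
  also have "\<dots> = \<chi> x ^ card (carrier G) * (\<Prod>y\<in>carrier G. \<chi> y)"
    by (simp add: prod.distrib)
  finally show ?thesis using nz by simp
qed

lemma lc_norm:
  assumes "group G" "finite (carrier G)" "linear_char G \<chi>" "x \<in> carrier G"
  shows "norm (\<chi> x) = 1"
proof -
  have N: "card (carrier G) > 0" using assms(1,2) group.subgroupE(2)[OF assms(1) group.subgroup_self[OF assms(1)]]
    by (simp add: card_gt_0_iff)
  have "norm (\<chi> x) ^ card (carrier G) = 1" using lc_pow[OF assms] by (metis norm_one norm_power)
  then show ?thesis using N power_eq_imp_eq_base[of "norm (\<chi> x)" "card (carrier G)" 1] by simp
qed

lemma lc_div:
  assumes "linear_char G \<chi>" "linear_char G \<mu>"
  shows "linear_char G (\<lambda>y. \<chi> y / \<mu> y)"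
  using assms unfolding linear_char_def by auto

lemma sum_lc:
  assumes "group G" "finite (carrier G)" "linear_char G \<chi>"
  shows "(\<Sum>y\<in>carrier G. \<chi> y) = (if \<forall>y\<in>carrier G. \<chi> y = 1 then of_nat (card (carrier G)) else 0)"
proof (cases "\<forall>y\<in>carrier G. \<chi> y = 1")
  case True then show ?thesis by simp
next
  case False
  then obtain g where g: "g \<in> carrier G" "\<chi> g \<noteq> 1" by blast
  have "(\<Sum>y\<in>carrier G. \<chi> y) = (\<Sum>y\<in>carrier G. \<chi> (g \<otimes>\<^bsub>G\<^esub> y))"
    using sum_shift[OF assms(1,2) g(1), of \<chi>] by simp
  also have "\<dots> = \<chi> g * (\<Sum>y\<in>carrier G. \<chi> y)"
    using assms(3) g unfolding linear_char_def by (simp add: sum_distrib_left)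
  finally have "(1 - \<chi> g) * (\<Sum>y\<in>carrier G. \<chi> y) = 0" by (simp add: algebra_simps)
  then have "(\<Sum>y\<in>carrier G. \<chi> y) = 0" using g by simp
  then show ?thesis unfolding if_not_P[OF False] .
qed

lemma orth_count:
  fixes q :: nat
  assumes "group G" "finite (carrier G)" "\<And>i. i \<le> q \<Longrightarrow> linear_char G (chi i)" "linear_char G \<mu>"
  shows "(\<Sum>y\<in>carrier G. (\<Sum>i\<le>q. chi i y) / \<mu> y)
     = of_nat (card (carrier G) * card {i. i \<le> q \<and> (\<forall>y\<in>carrier G. chi i y = \<mu> y)})"
proof -
  have nz: "y \<in> carrier G \<Longrightarrow> \<mu> y \<noteq> 0" for y using assms(4) unfolding linear_char_def by auto
  have "(\<Sum>y\<in>carrier G. (\<Sum>i\<le>q. chi i y) / \<mu> y) = (\<Sum>i\<le>q. \<Sum>y\<in>carrier G. chi i y / \<mu> y)"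
    by (simp add: sum_divide_distrib sum.swap[of _ "carrier G"])
  also have "\<dots> = (\<Sum>i\<le>q. if \<forall>y\<in>carrier G. chi i y = \<mu> y then of_nat (card (carrier G)) else 0)"
  proof (intro sum.cong refl)
    fix i assume "i \<in> {..q}"
    then have "linear_char G (\<lambda>y. chi i y / \<mu> y)" using assms(3,4) lc_div by auto
    from sum_lc[OF assms(1,2) this] show "(\<Sum>y\<in>carrier G. chi i y / \<mu> y) =
      (if \<forall>y\<in>carrier G. chi i y = \<mu> y then of_nat (card (carrier G)) else 0)"
      using nz by (simp add: divide_eq_1_iff cong: ball_cong)
  qed
  also have "\<dots> = (\<Sum>i\<in>{i\<in>{..q}. \<forall>y\<in>carrier G. chi i y = \<mu> y}. of_nat (card (carrier G)))"
    by (rule sum.inter_filter[symmetric]) simp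
  also have "\<dots> = of_nat (card (carrier G) * card {i\<in>{..q}. \<forall>y\<in>carrier G. chi i y = \<mu> y})"
    by simp
  also have "{i\<in>{..q}. \<forall>y\<in>carrier G. chi i y = \<mu> y} = {i. i \<le> q \<and> (\<forall>y\<in>carrier G. chi i y = \<mu> y)}"
    by auto
  finally show ?thesis .
qed

lemma unit_sum_eq:
  fixes x :: "nat \<Rightarrow> complex" and q :: nat
  assumes "\<And>i. i \<le> q \<Longrightarrow> norm (x i) = 1" "(\<Sum>i\<le>q. x i) = - of_nat (q + 1)"
  shows "\<forall>i\<le>q. x i = -1"
proof -
  have "(\<Sum>i\<le>q. Re (x i)) = Re (\<Sum>i\<le>q. x i)" by (simp add: Re_sum)
  also have "\<dots> = - real (q+1)" using assms(2) by simp
  finally have "(\<Sum>i\<le>q. Re (x i) + 1) = 0" by (simp add: sum.distrib)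
  moreover have "\<forall>i\<in>{..q}. Re (x i) + 1 \<ge> 0"
  proof
    fix i assume "i \<in> {..q}"
    then show "Re (x i) + 1 \<ge> 0" using abs_Re_le_cmod[of "x i"] assms(1)[of i] by (auto simp: abs_le_iff)
  qed
  ultimately have "\<forall>i\<in>{..q}. Re (x i) + 1 = 0" using sum_nonneg_eq_0_iff[of "{..q}" "\<lambda>i. Re (x i) + 1"] by simp
  then have re: "\<forall>i\<in>{..q}. Re (x i) = -1" by (metis eq_neg_iff_add_eq_0)
  show ?thesis
  proof (intro allI impI)
    fix i assume i: "i \<le> q"
    have "(cmod (x i))^2 = Re (x i)^2 + Im (x i)^2" by (simp add: cmod_power2)
    then have "Im (x i) = 0" using assms(1)[OF i] re i by simp
    then show "x i = -1" using re i by (simp add: complex_eq_iff)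
  qed
qed

lemma lam_one:
  assumes "group Z" "\<And>i. i \<le> q \<Longrightarrow> linear_char Z (chi i)"
    and L: "\<And>z. Lam z = (\<Sum>i\<le>q. chi i z)"
  shows "Lam \<one>\<^bsub>Z\<^esub> = of_nat (q + 1)"
  using lc_one[OF assms(1) assms(2)] L by simp

lemma part1:
  fixes q :: nat
  assumes G: "group Z" "finite (carrier Z)" and C: "\<And>i. i \<le> q \<Longrightarrow> linear_char Z (chi i)"
    and L: "\<And>z. Lam z = (\<Sum>i\<le>q. chi i z)"
    and van: "\<forall>z\<in>carrier Z - {\<one>\<^bsub>Z\<^esub>}. Lam z = 0"
  shows "card (carrier Z) dvd q + 1"
proof -
  have mu: "linear_char Z (\<lambda>_. 1)" unfolding linear_char_def by simp
  have one: "\<one>\<^bsub>Z\<^esub> \<in> carrier Z" using G(1) by (simp add: group.is_monoid monoid.one_closed)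
  have "(\<Sum>y\<in>carrier Z. Lam y) = Lam \<one>\<^bsub>Z\<^esub> + (\<Sum>y\<in>carrier Z - {\<one>\<^bsub>Z\<^esub>}. Lam y)"
    using G(2) one by (simp add: sum.remove)
  also have "\<dots> = of_nat (q+1)" using van lam_one[OF G(1) C L] by simp
  finally have "of_nat (q+1) = (\<Sum>y\<in>carrier Z. (\<Sum>i\<le>q. chi i y) / 1)" using L by simp
  also have "\<dots> = of_nat (card (carrier Z) * card {i. i \<le> q \<and> (\<forall>y\<in>carrier Z. chi i y = 1)})"
    by (rule orth_count[OF G C mu])
  finally have "q + 1 = card (carrier Z) * card {i. i \<le> q \<and> (\<forall>y\<in>carrier Z. chi i y = 1)}"
    by (simp only: of_nat_eq_iff)
  then show ?thesis by simp
qed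

lemma minus_one_all:
  fixes q :: nat
  assumes G: "group Z" "finite (carrier Z)" and C: "\<And>i. i \<le> q \<Longrightarrow> linear_char Z (chi i)"
    and z: "z \<in> carrier Z" and Lz: "(\<Sum>i\<le>q. chi i z) = - of_nat (q + 1)"
  shows "\<forall>i\<le>q. chi i z = -1"
  using unit_sum_eq[of q "\<lambda>i. chi i z"] lc_norm[OF G C z] Lz by simp

lemma part2:
  fixes q :: nat
  assumes G: "group Z" "finite (carrier Z)" and C: "\<And>i. i \<le> q \<Longrightarrow> linear_char Z (chi i)"
    and L: "\<And>z. Lam z = (\<Sum>i\<le>q. chi i z)"
    and z: "z \<in> carrier Z" and van: "\<forall>w\<in>carrier Z - {\<one>\<^bsub>Z\<^esub>, z}. Lam w = 0"
    and Lz: "Lam z = - of_nat (q + 1)"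
  shows "card (carrier Z) dvd 2 * (q + 1)"
proof -
  have one: "\<one>\<^bsub>Z\<^esub> \<in> carrier Z" using G(1) by (simp add: group.is_monoid monoid.one_closed)
  have L1: "Lam \<one>\<^bsub>Z\<^esub> = of_nat (q + 1)" by (rule lam_one[OF G(1) C L])
  have zn: "z \<noteq> \<one>\<^bsub>Z\<^esub>"
  proof
    assume "z = \<one>\<^bsub>Z\<^esub>"
    then have "of_nat (q+1) = - (of_nat (q+1) :: complex)" using L1 Lz by simp
    then have "of_nat (q+1) + of_nat (q+1) = (0::complex)" by (metis eq_neg_iff_add_eq_0)
    then have "of_nat ((q+1) + (q+1)) = (0::complex)" by (simp only: of_nat_add)
    then show False by (simp only: of_nat_eq_0_iff)
  qed
  have m1: "\<forall>i\<le>q. chi i z = -1" using minus_one_all[OF G C z] Lz L by simp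
  have c0: "chi 0 z = -1" using m1 by simp
  have c01: "chi 0 \<one>\<^bsub>Z\<^esub> = 1" using lc_one[OF G(1) C[of 0]] by simp
  have mu: "linear_char Z (chi 0)" using C by simp
  have "(\<Sum>y\<in>carrier Z. Lam y / chi 0 y) = (\<Sum>y\<in>{\<one>\<^bsub>Z\<^esub>, z}. Lam y / chi 0 y)"
    by (rule sum.mono_neutral_right) (use G(2) one z van in auto)
  also have "\<dots> = of_nat (2 * (q+1))" using zn L1 Lz c0 c01 by simp
  finally have "of_nat (2 * (q+1)) = (\<Sum>y\<in>carrier Z. (\<Sum>i\<le>q. chi i y) / chi 0 y)" using L by simp
  also have "\<dots> = of_nat (card (carrier Z) * card {i. i \<le> q \<and> (\<forall>y\<in>carrier Z. chi i y = chi 0 y)})"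
    by (rule orth_count[OF G C mu])
  finally have "2 * (q + 1) = card (carrier Z) * card {i. i \<le> q \<and> (\<forall>y\<in>carrier Z. chi i y = chi 0 y)}"
    by (simp only: of_nat_eq_iff)
  then show ?thesis by simp
qed

lemma part3_vals:
  fixes q n :: nat and Z and chi :: "nat \<Rightarrow> 'a \<Rightarrow> complex"
  assumes G: "group Z" "finite (carrier Z)" and C: "\<And>i. i \<le> q \<Longrightarrow> linear_char Z (chi i)"
    and L: "\<And>z. Lam z = (\<Sum>i\<le>q. chi i z)"
    and q2: "q \<ge> 2" and n: "n \<ge> 3" "odd n" "(n, q) \<noteq> (3, 2)"
    and sq: "\<forall>z\<in>carrier Z. (chi 0 z)^2 = 1"
    and S: "Sig = (\<lambda>z. - chi 0 z + ((of_nat q ^ n + 1) / (of_nat q + 1)) * Lam z)"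
    and vals: "\<forall>z\<in>carrier Z - {\<one>\<^bsub>Z\<^esub>}.
              Sig z \<in> {- (of_nat q ^ n), 0}
                   \<union> {of_nat q ^ i | i. i \<le> n - 1}
                   \<union> {- (of_nat q ^ i) | i. i \<le> n - 1}"
    and z: "z \<in> carrier Z" "z \<noteq> \<one>\<^bsub>Z\<^esub>"
  shows "Lam z = 0 \<or> Lam z = - of_nat (q + 1)"
proof -
  define Q :: int where "Q = int q"
  define A :: int where "A = (Q ^ n + 1) div (Q + 1)"
  have Q2: "Q \<ge> 2" using q2 unfolding Q_def by simp
  have ex: "(n, Q) \<noteq> (3, 2)" using n(3) unfolding Q_def by auto
  have AQ: "A * (Q + 1) = Q ^ n + 1" unfolding A_def using odd_pow_dvd[OF n(2), of Q] by simp
  have A3: "A \<ge> 3" using A_ge3[OF Q2 n(1) AQ] .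
  have "(of_int (A * (Q + 1)) :: complex) = of_int (Q ^ n + 1)" using AQ by simp
  then have "(of_int A :: complex) * (of_nat q + 1) = of_nat q ^ n + 1" unfolding Q_def by simp
  then have Ac: "(of_nat q ^ n + 1) / (of_nat q + 1) = (of_int A :: complex)"
    by (metis add_nonneg_eq_0_iff divide_eq_eq of_nat_0_le_iff of_nat_1 of_nat_add of_nat_eq_0_iff one_neq_zero zero_le_one)
  obtain ee :: int where ee: "ee = 1 \<or> ee = -1" "chi 0 z = of_int ee"
  proof -
    have "chi 0 z = 1 \<or> chi 0 z = -1" using sq z(1) by (simp add: power2_eq_1_iff)
    then show ?thesis using that[of 1] that[of "-1"] by auto
  qed
  obtain s :: int where s: "s \<in> {- (Q ^ n), 0} \<union> {Q ^ i | i. i \<le> n - 1} \<union> {- (Q ^ i) | i. i \<le> n - 1}"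
      "Sig z = of_int s"
  proof -
    have m: "Sig z \<in> {- (of_nat q ^ n), 0} \<union> {of_nat q ^ i | i. i \<le> n - 1} \<union> {- (of_nat q ^ i) | i. i \<le> n - 1}"
      using vals z by auto
    then consider "Sig z = - (of_nat q ^ n)" | "Sig z = 0" | i where "i \<le> n - 1" "Sig z = of_nat q ^ i"
      | i where "i \<le> n - 1" "Sig z = - (of_nat q ^ i)" by blast
    then show ?thesis
    proof cases
      case 1 then show ?thesis using that[of "- (Q ^ n)"] unfolding Q_def by simp
    next
      case 2 then show ?thesis using that[of 0] by simp
    next
      case (3 i) then show ?thesis using that[of "Q ^ i"] unfolding Q_def by auto
    next
      case (4 i) then show ?thesis using that[of "- (Q ^ i)"] unfolding Q_def by auto
    qed
  qed
  have Sz: "Sig z = - of_int ee + of_int A * Lam z" using S ee(2) Ac by simp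
  have A0: "(of_int A :: complex) \<noteq> 0" using A3 by simp
  have Lq: "Lam z = (of_int s + of_int ee) / of_int A" using Sz s(2) A0 by (simp add: field_simps)
  have "Lam z \<in> \<rat>" unfolding Lq by simp
  moreover have N: "card (carrier Z) > 0" using G z(1) by (auto simp: card_gt_0_iff)
  ultimately have "Lam z \<in> \<int>" unfolding L
    by (intro sum_roots_unity_int[OF N]) (use lc_pow[OF G C z(1)] in auto)
  then obtain k where k: "Lam z = of_int k" by (auto elim: Ints_cases)
  have "of_int (A * k) = (of_int (s + ee) :: complex)" using Lq k A0 by (simp add: field_simps)
  then have "A * k = s + ee" by (simp only: of_int_eq_iff)
  then have "k = 0 \<or> k = - (Q + 1)" using arith_main[OF Q2 n(1) ex AQ ee(1) s(1)] by simp
  then show ?thesis using k unfolding Q_def by auto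
qed

theorem mainTheorem9:
  fixes Z :: "('a, 'b) monoid_scheme"
    and q :: nat
    and chi :: "nat \<Rightarrow> 'a \<Rightarrow> complex"
  assumes "comm_group Z"
    and "finite (carrier Z)"
    and "prime_power_nat q"
    and "\<And>i. i \<le> q \<Longrightarrow> linear_char Z (chi i)"
  defines "Lam \<equiv> (\<lambda>z. \<Sum>i\<le>q. chi i z)"
  shows
    "((\<forall>z\<in>carrier Z - {\<one>\<^bsub>Z\<^esub>}. Lam z = 0) \<longrightarrow> card (carrier Z) dvd q + 1)
     \<and>
     ((\<exists>z\<in>carrier Z. (\<forall>w\<in>carrier Z - {\<one>\<^bsub>Z\<^esub>, z}. Lam w = 0) \<and> Lam z = - of_nat (q + 1))
        \<longrightarrow> card (carrier Z) dvd 2 * (q + 1))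
     \<and>
     (\<forall>n::nat. \<forall>Sig :: 'a \<Rightarrow> complex.
        n \<ge> 3 \<and> odd n \<and> (n, q) \<noteq> (3, 2)
        \<and> (\<forall>z\<in>carrier Z. (chi 0 z)^2 = 1)
        \<and> Sig = (\<lambda>z. - chi 0 z + ((of_nat q ^ n + 1) / (of_nat q + 1)) * Lam z)
        \<and> (\<forall>z\<in>carrier Z - {\<one>\<^bsub>Z\<^esub>}.
              Sig z \<in> {- (of_nat q ^ n), 0}
                   \<union> {of_nat q ^ i | i. i \<le> n - 1}
                   \<union> {- (of_nat q ^ i) | i. i \<le> n - 1})
        \<longrightarrow> card (carrier Z) dvd q + 1
            \<or> (\<exists>z\<in>carrier Z. (\<forall>i\<le>q. chi i z = -1)
                  \<and> (faithful_char Z Sig \<longrightarrow> card (carrier Z) dvd 2 * (q + 1))))"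
proof -
  have Gr: "group Z" using assms(1) by (simp add: comm_group.axioms(2))
  note G = Gr assms(2)
  note C = assms(4)
  have L: "\<And>z. Lam z = (\<Sum>i\<le>q. chi i z)" unfolding Lam_def by simp
  have q2: "q \<ge> 2"
  proof -
    obtain p k where "prime p" "k \<ge> 1" "q = p ^ k" using assms(3) unfolding prime_power_nat_def by blast
    then have p2: "p \<ge> 2" using prime_ge_2_nat by blast
    have "p ^ 1 \<le> p ^ k" using p2 \<open>k \<ge> 1\<close> by (intro power_increasing) auto
    note p2 this
    then show ?thesis using \<open>q = p ^ k\<close> by simp
  qed
  have P1: "(\<forall>z\<in>carrier Z - {\<one>\<^bsub>Z\<^esub>}. Lam z = 0) \<Longrightarrow> card (carrier Z) dvd q + 1"
    using part1[OF G C L] by blast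
  have P2: "card (carrier Z) dvd 2 * (q + 1)"
    if "z \<in> carrier Z" "\<forall>w\<in>carrier Z - {\<one>\<^bsub>Z\<^esub>, z}. Lam w = 0" "Lam z = - of_nat (q + 1)" for z
    using part2[OF G C L that] .
  have P3: "card (carrier Z) dvd q + 1
            \<or> (\<exists>z\<in>carrier Z. (\<forall>i\<le>q. chi i z = -1)
                  \<and> (faithful_char Z Sig \<longrightarrow> card (carrier Z) dvd 2 * (q + 1)))"
    if h: "n \<ge> 3 \<and> odd n \<and> (n, q) \<noteq> (3, 2)
        \<and> (\<forall>z\<in>carrier Z. (chi 0 z)^2 = 1)
        \<and> Sig = (\<lambda>z. - chi 0 z + ((of_nat q ^ n + 1) / (of_nat q + 1)) * Lam z)
        \<and> (\<forall>z\<in>carrier Z - {\<one>\<^bsub>Z\<^esub>}.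
              Sig z \<in> {- (of_nat q ^ n), 0}
                   \<union> {of_nat q ^ i | i. i \<le> n - 1}
                   \<union> {- (of_nat q ^ i) | i. i \<le> n - 1})" for n Sig
  proof -
    have V: "Lam z = 0 \<or> Lam z = - of_nat (q + 1)" if "z \<in> carrier Z" "z \<noteq> \<one>\<^bsub>Z\<^esub>" for z
      using part3_vals[OF G C L q2, of n Sig z] h that by blast
    show ?thesis
    proof (cases "\<forall>z\<in>carrier Z - {\<one>\<^bsub>Z\<^esub>}. Lam z = 0")
      case True then show ?thesis using P1 by blast
    next
      case False
      then obtain z where z: "z \<in> carrier Z" "z \<noteq> \<one>\<^bsub>Z\<^esub>" "Lam z = - of_nat (q + 1)"
        using V by blast
      have mz: "\<forall>i\<le>q. chi i z = -1" using minus_one_all[OF G C z(1)] z(3) L by simp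
      have sq1: "\<forall>i\<le>q. chi i (z \<otimes>\<^bsub>Z\<^esub> w) = 1"
        if "w \<in> carrier Z" "\<forall>i\<le>q. chi i w = -1" for w
        using C mz that z(1) unfolding linear_char_def by auto
      have qq: "Lam y = of_nat (q+1)" if "y \<in> carrier Z" "\<forall>i\<le>q. chi i y = 1" for y
        using that L by simp
      have ne: "of_nat (q + 1) \<noteq> (0::complex)" "of_nat (q + 1) \<noteq> - (of_nat (q + 1) :: complex)"
      proof -
        show "of_nat (q + 1) \<noteq> (0::complex)" by (simp only: of_nat_eq_0_iff)
        show "of_nat (q + 1) \<noteq> - (of_nat (q + 1) :: complex)"
        proof
          assume "of_nat (q + 1) = - (of_nat (q + 1) :: complex)"
          then have "of_nat (q+1) + of_nat (q+1) = (0::complex)" by (metis eq_neg_iff_add_eq_0)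
          then have "of_nat ((q+1) + (q+1)) = (0::complex)" by (simp only: of_nat_add)
          then show False by (simp only: of_nat_eq_0_iff)
        qed
      qed
      have one_of: "z \<otimes>\<^bsub>Z\<^esub> w = \<one>\<^bsub>Z\<^esub>" if "w \<in> carrier Z" "\<forall>i\<le>q. chi i w = -1" for w
      proof (rule ccontr)
        assume nn: "z \<otimes>\<^bsub>Z\<^esub> w \<noteq> \<one>\<^bsub>Z\<^esub>"
        have zw: "z \<otimes>\<^bsub>Z\<^esub> w \<in> carrier Z" using that z(1) Gr by (simp add: group.is_monoid monoid.m_closed)
        have "Lam (z \<otimes>\<^bsub>Z\<^esub> w) = of_nat (q+1)" using qq[OF zw sq1[OF that]] .
        then show False using V[OF zw nn] ne by auto
      qed
      have van: "\<forall>w\<in>carrier Z - {\<one>\<^bsub>Z\<^esub>, z}. Lam w = 0"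
      proof
        fix w assume w: "w \<in> carrier Z - {\<one>\<^bsub>Z\<^esub>, z}"
        show "Lam w = 0"
        proof (rule ccontr)
          assume "Lam w \<noteq> 0"
          then have "Lam w = - of_nat (q + 1)" using V w by blast
          then have mw: "\<forall>i\<le>q. chi i w = -1" using minus_one_all[OF G C, where z=w] w L by simp
          have "z \<otimes>\<^bsub>Z\<^esub> w = z \<otimes>\<^bsub>Z\<^esub> z" using one_of[of w] one_of[of z] w mw mz z(1) by simp
          then have "w = z" using monoid.Units_l_cancel[OF group.is_monoid[OF Gr], of z w z] group.Units_eq[OF Gr] w z(1) by simp
          then show False using w by simp
        qed
      qed
      have "card (carrier Z) dvd 2 * (q + 1)" using P2[OF z(1) van z(3)] .
      then show ?thesis using z(1) mz by blast
    qed
  qed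
  show ?thesis using P1 P2 P3 by blast
qed

end
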